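(* Let $(S,M)$ be a Coxeter matrix, $L_S$ a weight function, $e=\{s_+,s_-\}$ with $m_{s_+,s_-}=3$, and $(S/e,N)$ the edge contraction with the induced weight function $L_{S/e}$. Then there is an $\mathcal A$-algebra homomorphism $\phi_v:H_{S/e}\to H_S$ such that $\phi_v(T'_s)=T_s$ for all $s\in S/e$, $s\ne s_0$, and $\phi_v(T'_{s_0})=T_{s_+}T_{s_-}T_{s_+}^{-1}$.
   Context: $\mathcal A=\mathbb Z[v,v^{-1}]$. A Coxeter matrix on $S$ is a symmetric matrix $M=(m_{s,s'})$ with entries in $\mathbb Z_{\ge1}\sqcup\{\infty\}$, $m_{s,s'}=1$ iff $s=s'$; $W_{S,M}$ is the associated Coxeter group. A weight function is a map $L_S:S\to\mathbb Z$ with $L_S(s)=L_S(s')$ whenever $s,s'$ are conjugate in $W_{S,M}$; put $v_s=v^{L_S(s)}$. The Hecke algebra $H_S$ is the associative unital $\mathcal A$-algebra generated by $T_s$ ($s\in S$) with relations $(T_s-v_s)(T_s+v_s^{-1})=0$ for all $s$, and $T_sT_{s'}T_s\cdots=T_{s'}T_sT_{s'}\cdots$ (both sides with $m_{s,s'}$ factors) for all $s\ne s'$ with $m_{s,s'}\ne\infty$. (In particular each $T_s$ is invertible.) Edge contraction: $e=\{s_+,s_-\}\subseteq S$ with $m_{s_+,s_-}=3$; $S/e=(S\setminus\{s_+,s_-\})\sqcup\{s_0\}$; $N=(n_{s,s'})$ with $n_{s,s}=1$, $n_{s,s'}=m_{s,s'}$ for distinct $s,s'\ne s_0$, and for $s\neq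 s_0$: $n_{s,s_0}=n_{s_0,s}=m_{s,s_+}+m_{s,s_-}-2$ if $m_{s,s_+}=2$ or $m_{s,s_-}=2$ (with $\infty+k=\infty$), and $=\infty$ if both are $>2$. The induced weight function is $L_{S/e}(s_0)=L_S(s_+)$ and $L_{S/e}(s)=L_S(s)$ for $s\ne s_0$ (note $s_+,s_-$ are conjugate so $L_S(s_+)=L_S(s_-)$). $H_{S/e}$ is the Hecke algebra of $(S/e,N,L_{S/e})$, with generators denoted $T'_s$, $s\in S/e$. *)

theory Defs
  imports "HOL-Algebra.QuotRing" "HOL-Library.Poly_Mapping" "HOL-Library.Extended_Nat"
begin

text \<open>A Laurent polynomial sum_k a_k v^k is a finitely supported map k -> a_k;
  Poly_Mapping gives int =>0 int the convolution product, i.e. the group ring Z[Z].\<close>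
type_synonym laurent = "int \<Rightarrow>\<^sub>0 int"

definition vpow :: "int \<Rightarrow> laurent" where
  "vpow k = Poly_Mapping.single k 1"

definition coxeter_matrix :: "'s set \<Rightarrow> ('s \<Rightarrow> 's \<Rightarrow> enat) \<Rightarrow> bool" where
  "coxeter_matrix S M \<longleftrightarrow>
     (\<forall>s\<in>S. \<forall>t\<in>S. M s t = M t s \<and> M s t \<ge> 1 \<and> (M s t = 1 \<longleftrightarrow> s = t))"

definition alt_word :: "'s \<Rightarrow> 's \<Rightarrow> nat \<Rightarrow> 's list" where
  "alt_word s t n = map (\<lambda>i. if even i then s else t) [0..<n]"

text \<open>The Coxeter group W_{S,M}: words over S modulo the congruence generated by
  s s = 1 and the braid relations (a monoid presentation; since the generators are
  involutions this is the group presentation of W).\<close>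
inductive cox_eq :: "'s set \<Rightarrow> ('s \<Rightarrow> 's \<Rightarrow> enat) \<Rightarrow> 's list \<Rightarrow> 's list \<Rightarrow> bool"
  for S M where
  refl: "cox_eq S M w w"
| sym: "cox_eq S M u w \<Longrightarrow> cox_eq S M w u"
| trans: "cox_eq S M u w \<Longrightarrow> cox_eq S M w x \<Longrightarrow> cox_eq S M u x"
| invol: "s \<in> S \<Longrightarrow> cox_eq S M (u @ [s, s] @ w) (u @ w)"
| braid: "s \<in> S \<Longrightarrow> t \<in> S \<Longrightarrow> s \<noteq> t \<Longrightarrow> M s t = enat m \<Longrightarrow>
          cox_eq S M (u @ alt_word s t m @ w) (u @ alt_word t s m @ w)"

definition cox_conjugate :: "'s set \<Rightarrow> ('s \<Rightarrow> 's \<Rightarrow> enat) \<Rightarrow> 's \<Rightarrow> 's \<Rightarrow> bool" where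
  "cox_conjugate S M s t \<longleftrightarrow>
     (\<exists>w\<in>lists S. \<exists>w'\<in>lists S. cox_eq S M (w @ w') [] \<and> cox_eq S M (w @ [s] @ w') [t])"

definition weight_function :: "'s set \<Rightarrow> ('s \<Rightarrow> 's \<Rightarrow> enat) \<Rightarrow> ('s \<Rightarrow> int) \<Rightarrow> bool" where
  "weight_function S M L \<longleftrightarrow>
     (\<forall>s\<in>S. \<forall>t\<in>S. cox_conjugate S M s t \<longrightarrow> L s = L t)"

text \<open>Elements: finitely supported maps from words over S to A (noncommutative polynomials).\<close>
definition free_alg :: "'s set \<Rightarrow> ('s list \<Rightarrow> laurent) ring" where
  "free_alg S = \<lparr> carrier = {f. finite {w. f w \<noteq> 0} \<and> (\<forall>w. f w \<noteq> 0 \<longrightarrow> set w \<subseteq> S)},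
                  mult = (\<lambda>f g w. \<Sum>i\<le>length w. f (take i w) * g (drop i w)),
                  one = (\<lambda>w. if w = [] then 1 else 0),
                  zero = (\<lambda>w. 0),
                  add = (\<lambda>f g w. f w + g w) \<rparr>"

definition scal :: "laurent \<Rightarrow> 's list \<Rightarrow> laurent" where
  "scal c = (\<lambda>w. if w = [] then c else 0)"

definition gen :: "'s \<Rightarrow> 's list \<Rightarrow> laurent" where
  "gen s = (\<lambda>w. if w = [s] then 1 else 0)"

definition word_prod :: "'s set \<Rightarrow> 's list \<Rightarrow> 's list \<Rightarrow> laurent" where
  "word_prod S w = foldr (\<lambda>s x. gen s \<otimes>\<^bsub>free_alg S\<^esub> x) w \<one>\<^bsub>free_alg S\<^esub>"

definition hecke_rels :: "'s set \<Rightarrow> ('s \<Rightarrow> 's \<Rightarrow> enat) \<Rightarrow> ('s \<Rightarrow> int) \<Rightarrow> ('s list \<Rightarrow> laurent) set" where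
  "hecke_rels S M L =
     {(gen s \<ominus>\<^bsub>free_alg S\<^esub> scal (vpow (L s))) \<otimes>\<^bsub>free_alg S\<^esub> (gen s \<oplus>\<^bsub>free_alg S\<^esub> scal (vpow (- L s)))
        | s. s \<in> S}
   \<union> {word_prod S (alt_word s t m) \<ominus>\<^bsub>free_alg S\<^esub> word_prod S (alt_word t s m)
        | s t m. s \<in> S \<and> t \<in> S \<and> s \<noteq> t \<and> M s t = enat m}"

definition hecke_ideal :: "'s set \<Rightarrow> ('s \<Rightarrow> 's \<Rightarrow> enat) \<Rightarrow> ('s \<Rightarrow> int) \<Rightarrow> ('s list \<Rightarrow> laurent) set" where
  "hecke_ideal S M L = genideal (free_alg S) (hecke_rels S M L)"

text \<open>The Hecke algebra H_S (the quotient ring; its A-algebra structure is given by the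
  image of the scalars).\<close>
definition hecke :: "'s set \<Rightarrow> ('s \<Rightarrow> 's \<Rightarrow> enat) \<Rightarrow> ('s \<Rightarrow> int) \<Rightarrow> ('s list \<Rightarrow> laurent) set ring" where
  "hecke S M L = free_alg S Quot hecke_ideal S M L"

definition hT :: "'s set \<Rightarrow> ('s \<Rightarrow> 's \<Rightarrow> enat) \<Rightarrow> ('s \<Rightarrow> int) \<Rightarrow> 's \<Rightarrow> ('s list \<Rightarrow> laurent) set" where
  "hT S M L s = hecke_ideal S M L +>\<^bsub>free_alg S\<^esub> gen s"

definition hscal :: "'s set \<Rightarrow> ('s \<Rightarrow> 's \<Rightarrow> enat) \<Rightarrow> ('s \<Rightarrow> int) \<Rightarrow> laurent \<Rightarrow> ('s list \<Rightarrow> laurent) set" where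
  "hscal S M L c = hecke_ideal S M L +>\<^bsub>free_alg S\<^esub> scal c"

definition A_algebra_hom ::
  "'s set \<Rightarrow> ('s \<Rightarrow> 's \<Rightarrow> enat) \<Rightarrow> ('s \<Rightarrow> int) \<Rightarrow>
   't set \<Rightarrow> ('t \<Rightarrow> 't \<Rightarrow> enat) \<Rightarrow> ('t \<Rightarrow> int) \<Rightarrow>
   (('s list \<Rightarrow> laurent) set \<Rightarrow> ('t list \<Rightarrow> laurent) set) \<Rightarrow> bool" where
  "A_algebra_hom S M L S' M' L' \<phi> \<longleftrightarrow>
     \<phi> \<in> ring_hom (hecke S M L) (hecke S' M' L') \<and>
     (\<forall>c. \<phi> (hscal S M L c) = hscal S' M' L' c)"

text \<open>S/e is modelled on the type 's option: None is the new vertex s0 and Some s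
  (s in S - e) the old vertices.\<close>
definition contr_set :: "'s set \<Rightarrow> 's \<Rightarrow> 's \<Rightarrow> 's option set" where
  "contr_set S sp sm = {None} \<union> Some ` (S - {sp, sm})"

definition contr_edge_val :: "('s \<Rightarrow> 's \<Rightarrow> enat) \<Rightarrow> 's \<Rightarrow> 's \<Rightarrow> 's \<Rightarrow> enat" where
  "contr_edge_val M sp sm s =
     (if M s sp = 2 \<or> M s sm = 2 then M s sp + M s sm - 2 else \<infinity>)"

fun contr_matrix :: "('s \<Rightarrow> 's \<Rightarrow> enat) \<Rightarrow> 's \<Rightarrow> 's \<Rightarrow> 's option \<Rightarrow> 's option \<Rightarrow> enat" where
  "contr_matrix M sp sm None None = 1"
| "contr_matrix M sp sm (Some s) (Some t) = (if s = t then 1 else M s t)"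
| "contr_matrix M sp sm (Some s) None = contr_edge_val M sp sm s"
| "contr_matrix M sp sm None (Some s) = contr_edge_val M sp sm s"

fun contr_weight :: "('s \<Rightarrow> int) \<Rightarrow> 's \<Rightarrow> 's option \<Rightarrow> int" where
  "contr_weight L sp None = L sp"
| "contr_weight L sp (Some s) = L s"

end

theory Submission
  imports Defs
begin


lemma tri: fixes F :: "nat \<Rightarrow> nat \<Rightarrow> 'a::comm_monoid_add"
  shows "(\<Sum>i\<le>n. \<Sum>j\<le>i. F j i) = (\<Sum>j\<le>n. \<Sum>k\<le>n-j. F j (j+k))"
proof (induction n)
  case 0 then show ?case by simp
next
  case (Suc n)
  have "(\<Sum>j\<le>Suc n. \<Sum>k\<le>Suc n-j. F j (j+k)) = (\<Sum>j\<le>n. \<Sum>k\<le>Suc n-j. F j (j+k)) + F (Suc n) (Suc n)"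
    by simp
  also have "(\<Sum>j\<le>n. \<Sum>k\<le>Suc n-j. F j (j+k)) = (\<Sum>j\<le>n. (\<Sum>k\<le>n-j. F j (j+k)) + F j (Suc n))"
  proof (rule sum.cong[OF HOL.refl])
    fix j assume "j \<in> {..n}"
    then have "Suc n - j = Suc (n-j)" by auto
    then show "(\<Sum>k\<le>Suc n-j. F j (j+k)) = (\<Sum>k\<le>n-j. F j (j+k)) + F j (Suc n)"
      using \<open>j \<in> {..n}\<close> by simp
  qed
  finally show ?case using Suc by (simp add: sum.distrib add.assoc)
qed

lemma fa_carrier: "f \<in> carrier (free_alg S) \<longleftrightarrow> finite {w. f w \<noteq> 0} \<and> (\<forall>w. f w \<noteq> 0 \<longrightarrow> set w \<subseteq> S)"
  by (simp add: free_alg_def)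
lemma fa_mult: "f \<otimes>\<^bsub>free_alg S\<^esub> g = (\<lambda>w. \<Sum>i\<le>length w. f (take i w) * g (drop i w))"
  by (simp add: free_alg_def)
lemma fa_add: "f \<oplus>\<^bsub>free_alg S\<^esub> g = (\<lambda>w. f w + g w)"
  by (simp add: free_alg_def)
lemma fa_one: "\<one>\<^bsub>free_alg S\<^esub> = (\<lambda>w. if w = [] then 1 else 0)"
  by (simp add: free_alg_def)
lemma fa_zero: "\<zero>\<^bsub>free_alg S\<^esub> = (\<lambda>w. 0)"
  by (simp add: free_alg_def)

lemma conv_assoc:
  fixes f g h :: "'s list \<Rightarrow> laurent"
  shows "(\<Sum>i\<le>length w. (\<Sum>j\<le>length (take i w). f (take j (take i w)) * g (drop j (take i w))) * h (drop i w))
   = (\<Sum>j\<le>length w. f (take j w) * (\<Sum>k\<le>length (drop j w). g (take k (drop j w)) * h (drop k (drop j w))))"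
proof -
  let ?n = "length w"
  have "(\<Sum>i\<le>?n. (\<Sum>j\<le>length (take i w). f (take j (take i w)) * g (drop j (take i w))) * h (drop i w))
     = (\<Sum>i\<le>?n. \<Sum>j\<le>i. f (take j w) * g (take (i-j) (drop j w)) * h (drop i w))"
  proof (rule sum.cong[OF HOL.refl])
    fix i assume "i \<in> {..?n}"
    then have li: "length (take i w) = i" by auto
    show "(\<Sum>j\<le>length (take i w). f (take j (take i w)) * g (drop j (take i w))) * h (drop i w)
      = (\<Sum>j\<le>i. f (take j w) * g (take (i-j) (drop j w)) * h (drop i w))"
      unfolding li sum_distrib_right
      by (rule sum.cong[OF HOL.refl]) (simp add: min_def take_drop)
  qed
  also have "\<dots> = (\<Sum>j\<le>?n. \<Sum>k\<le>?n-j. f (take j w) * g (take ((j+k)-j) (drop j w)) * h (drop (j+k) w))"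
    by (rule tri)
  also have "\<dots> = (\<Sum>j\<le>?n. f (take j w) * (\<Sum>k\<le>length (drop j w). g (take k (drop j w)) * h (drop k (drop j w))))"
    by (simp add: sum_distrib_left mult.assoc add.commute)
  finally show ?thesis .
qed

lemma supp_mult_sub:
  "{w. (\<Sum>i\<le>length w. f (take i w) * g (drop i w)) \<noteq> (0::laurent)} \<subseteq>
    (\<lambda>(u,v). u @ v) ` ({w. f w \<noteq> 0} \<times> {w. g w \<noteq> 0})"
proof
  fix w assume "w \<in> {w. (\<Sum>i\<le>length w. f (take i w) * g (drop i w)) \<noteq> 0}"
  then obtain i where "f (take i w) * g (drop i w) \<noteq> 0"
    by (auto elim: sum.not_neutral_contains_not_neutral)
  then have "f (take i w) \<noteq> 0" "g (drop i w) \<noteq> 0" by auto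
  then show "w \<in> (\<lambda>(u,v). u @ v) ` ({w. f w \<noteq> 0} \<times> {w. g w \<noteq> 0})"
    by (intro image_eqI[of _ _ "(take i w, drop i w)"]) auto
qed

lemma fa_ring: "ring (free_alg S)"
proof (rule ringI)
  show "abelian_group (free_alg S)"
  proof (rule abelian_groupI)
    fix x y assume x: "x \<in> carrier (free_alg S)" and y: "y \<in> carrier (free_alg S)"
    have "{w. x w + y w \<noteq> 0} \<subseteq> {w. x w \<noteq> 0} \<union> {w. y w \<noteq> 0}" by auto
    then show "x \<oplus>\<^bsub>free_alg S\<^esub> y \<in> carrier (free_alg S)"
      using x y unfolding fa_carrier fa_add by (auto intro: finite_subset)
  next
    show "\<zero>\<^bsub>free_alg S\<^esub> \<in> carrier (free_alg S)" by (simp add: fa_carrier fa_zero)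
  next
    fix x y z show "(x \<oplus>\<^bsub>free_alg S\<^esub> y) \<oplus>\<^bsub>free_alg S\<^esub> z = x \<oplus>\<^bsub>free_alg S\<^esub> (y \<oplus>\<^bsub>free_alg S\<^esub> z)"
      by (simp add: fa_add add.assoc)
  next
    fix x y show "x \<oplus>\<^bsub>free_alg S\<^esub> y = y \<oplus>\<^bsub>free_alg S\<^esub> x"
      by (simp add: fa_add add.commute)
  next
    fix x show "\<zero>\<^bsub>free_alg S\<^esub> \<oplus>\<^bsub>free_alg S\<^esub> x = x"
      by (simp add: fa_add fa_zero)
  next
    fix x assume x: "x \<in> carrier (free_alg S)"
    show "\<exists>y\<in>carrier (free_alg S). y \<oplus>\<^bsub>free_alg S\<^esub> x = \<zero>\<^bsub>free_alg S\<^esub>"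
      by (rule bexI[of _ "\<lambda>w. - x w"]) (use x in \<open>auto simp: fa_add fa_zero fa_carrier\<close>)
  qed
next
  show "monoid (free_alg S)"
  proof (rule monoidI)
    fix x y assume x: "x \<in> carrier (free_alg S)" and y: "y \<in> carrier (free_alg S)"
    have "finite ((\<lambda>(u,v). u @ v) ` ({w. x w \<noteq> 0} \<times> {w. y w \<noteq> 0}))"
      using x y by (simp add: fa_carrier)
    then have fin: "finite {w. (\<Sum>i\<le>length w. x (take i w) * y (drop i w)) \<noteq> 0}"
      by (rule finite_subset[OF supp_mult_sub])
    have "set w \<subseteq> S" if "(\<Sum>i\<le>length w. x (take i w) * y (drop i w)) \<noteq> 0" for w
    proof -
      from that obtain i where "x (take i w) * y (drop i w) \<noteq> 0"
        by (auto elim: sum.not_neutral_contains_not_neutral)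
      then have "x (take i w) \<noteq> 0" "y (drop i w) \<noteq> 0" by auto
      then have "set (take i w) \<subseteq> S" "set (drop i w) \<subseteq> S" using x y by (auto simp: fa_carrier)
      then show ?thesis by (metis append_take_drop_id set_append Un_subset_iff)
    qed
    with fin show "x \<otimes>\<^bsub>free_alg S\<^esub> y \<in> carrier (free_alg S)"
      by (simp add: fa_carrier fa_mult)
  next
    show "\<one>\<^bsub>free_alg S\<^esub> \<in> carrier (free_alg S)"
      by (simp add: fa_carrier fa_one)
  next
    fix x y z
    show "(x \<otimes>\<^bsub>free_alg S\<^esub> y) \<otimes>\<^bsub>free_alg S\<^esub> z = x \<otimes>\<^bsub>free_alg S\<^esub> (y \<otimes>\<^bsub>free_alg S\<^esub> z)"
      unfolding fa_mult by (rule ext) (rule conv_assoc)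
  next
    fix x
    show "\<one>\<^bsub>free_alg S\<^esub> \<otimes>\<^bsub>free_alg S\<^esub> x = x"
    proof (rule ext)
      fix w
      have "(\<Sum>i\<le>length w. (if take i w = [] then 1 else 0) * x (drop i w))
          = (\<Sum>i\<le>length w. if i = 0 then x (drop i w) else 0)"
        by (rule sum.cong) auto
      then show "(\<one>\<^bsub>free_alg S\<^esub> \<otimes>\<^bsub>free_alg S\<^esub> x) w = x w"
        by (simp add: fa_mult fa_one)
    qed
  next
    fix x
    show "x \<otimes>\<^bsub>free_alg S\<^esub> \<one>\<^bsub>free_alg S\<^esub> = x"
    proof (rule ext)
      fix w
      have "(\<Sum>i\<le>length w. x (take i w) * (if drop i w = [] then 1 else 0))
          = (\<Sum>i\<le>length w. if i = length w then x (take i w) else 0)"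
        by (rule sum.cong) auto
      then show "(x \<otimes>\<^bsub>free_alg S\<^esub> \<one>\<^bsub>free_alg S\<^esub>) w = x w"
        by (simp add: fa_mult fa_one)
    qed
  qed
next
  fix x y z
  show "(x \<oplus>\<^bsub>free_alg S\<^esub> y) \<otimes>\<^bsub>free_alg S\<^esub> z = x \<otimes>\<^bsub>free_alg S\<^esub> z \<oplus>\<^bsub>free_alg S\<^esub> y \<otimes>\<^bsub>free_alg S\<^esub> z"
    by (simp add: fa_mult fa_add distrib_right sum.distrib)
next
  fix x y z
  show "z \<otimes>\<^bsub>free_alg S\<^esub> (x \<oplus>\<^bsub>free_alg S\<^esub> y) = z \<otimes>\<^bsub>free_alg S\<^esub> x \<oplus>\<^bsub>free_alg S\<^esub> z \<otimes>\<^bsub>free_alg S\<^esub> y"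
    by (simp add: fa_mult fa_add distrib_left sum.distrib)
qed



definition mnm :: "laurent \<Rightarrow> 's list \<Rightarrow> 's list \<Rightarrow> laurent" where
  "mnm c u = (\<lambda>w. if w = u then c else 0)"

lemma mnm_carrier: "set u \<subseteq> S \<Longrightarrow> mnm c u \<in> carrier (free_alg S)"
proof -
  assume "set u \<subseteq> S"
  moreover have "{w. mnm c u w \<noteq> 0} \<subseteq> {u}" by (auto simp: mnm_def)
  ultimately show ?thesis by (auto simp: fa_carrier mnm_def intro: finite_subset)
qed

lemma mono_mult: "mnm c u \<otimes>\<^bsub>free_alg S\<^esub> mnm d v = mnm (c*d) (u@v)"
proof (rule ext)
  fix w
  have "(\<Sum>i\<le>length w. mnm c u (take i w) * mnm d v (drop i w))
      = (\<Sum>i\<le>length w. if i = length u then (if w = u @ v then c * d else 0) else 0)"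
  proof (rule sum.cong[OF HOL.refl])
    fix i assume i: "i \<in> {..length w}"
    have eq: "take i w = u \<and> drop i w = v \<longleftrightarrow> i = length u \<and> w = u @ v"
    proof
      assume "take i w = u \<and> drop i w = v"
      then show "i = length u \<and> w = u @ v" using i by (metis append_take_drop_id atMost_iff length_take min_absorb2)
    next
      assume "i = length u \<and> w = u @ v"
      then show "take i w = u \<and> drop i w = v" by simp
    qed
    then show "mnm c u (take i w) * mnm d v (drop i w) = (if i = length u then (if w = u @ v then c * d else 0) else 0)"
    proof (cases "take i w = u \<and> drop i w = v")
      case True
      then show ?thesis using eq by (simp add: mnm_def)
    next
      case False
      then have "mnm c u (take i w) * mnm d v (drop i w) = 0" by (auto simp: mnm_def)
      moreover have "\<not> (i = length u \<and> w = u @ v)" using False eq by blast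
      ultimately show ?thesis by auto
    qed
  qed
  also have "\<dots> = mnm (c*d) (u@v) w"
    by (auto simp: mnm_def)
  finally show "(mnm c u \<otimes>\<^bsub>free_alg S\<^esub> mnm d v) w = mnm (c * d) (u @ v) w"
    by (simp add: fa_mult)
qed

lemma gen_mono: "gen s = mnm 1 [s]" by (simp add: gen_def mnm_def)
lemma scal_mono: "scal c = mnm c []" by (simp add: scal_def mnm_def)
lemma one_mono: "\<one>\<^bsub>free_alg S\<^esub> = mnm 1 []" by (simp add: fa_one mnm_def)

lemma fa_finsum_apply:
  assumes "finite D" "F \<in> D \<rightarrow> carrier (free_alg S)"
  shows "finsum (free_alg S) F D w = (\<Sum>d\<in>D. F d w)"
  using assms
proof (induction D rule: finite_induct)
  case empty
  then show ?case by (simp add: abelian_monoid.finsum_empty[OF ring.axioms(1)[OF fa_ring, THEN abelian_group.axioms(1)]] fa_zero)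
next
  case (insert x F')
  interpret A: ring "free_alg S" by (rule fa_ring)
  from insert show ?case by (simp add: A.finsum_insert fa_add)
qed

lemma fa_decomp:
  assumes f: "f \<in> carrier (free_alg S)"
  shows "f = finsum (free_alg S) (\<lambda>u. mnm (f u) u) {w. f w \<noteq> 0}"
proof (rule ext)
  fix w
  have fin: "finite {w. f w \<noteq> 0}" using f by (simp add: fa_carrier)
  have car: "(\<lambda>u. mnm (f u) u) \<in> {w. f w \<noteq> 0} \<rightarrow> carrier (free_alg S)"
    using f by (auto simp: fa_carrier intro!: mnm_carrier)
  have "(\<Sum>d\<in>{w. f w \<noteq> 0}. mnm (f d) d w) = f w"
    by (cases "f w = 0") (auto simp: mnm_def fin if_distrib sum.delta' cong: sum.cong)
  then show "f w = finsum (free_alg S) (\<lambda>u. mnm (f u) u) {w. f w \<noteq> 0} w"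
    by (simp add: fa_finsum_apply[OF fin car])
qed



locale evalctx = ring R for R (structure) +
  fixes S' :: "'t set" and sc :: "laurent \<Rightarrow> 'r" and g :: "'t \<Rightarrow> 'r"
  assumes sc_closed [simp]: "sc c \<in> carrier R"
  and sc_add: "sc (c + d) = sc c \<oplus> sc d"
  and sc_mult: "sc (c * d) = sc c \<otimes> sc d"
  and sc_one: "sc 1 = \<one>"
  and sc_central: "x \<in> carrier R \<Longrightarrow> sc c \<otimes> x = x \<otimes> sc c"
  and g_closed: "s \<in> S' \<Longrightarrow> g s \<in> carrier R"
begin

definition wimg :: "'t list \<Rightarrow> 'r" where
  "wimg w = foldr (\<lambda>s x. g s \<otimes> x) w \<one>"

definition Ev :: "('t list \<Rightarrow> laurent) \<Rightarrow> 'r" where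
  "Ev f = (\<Oplus>w\<in>{w. f w \<noteq> 0}. sc (f w) \<otimes> wimg w)"

lemma wimg_closed: "set w \<subseteq> S' \<Longrightarrow> wimg w \<in> carrier R"
  by (induction w) (auto simp: wimg_def g_closed)

lemma wimg_append: "set u \<subseteq> S' \<Longrightarrow> set v \<subseteq> S' \<Longrightarrow> wimg (u @ v) = wimg u \<otimes> wimg v"
  by (induction u) (auto simp: wimg_def g_closed wimg_closed[unfolded wimg_def] m_assoc)

lemma sc_zero: "sc 0 = \<zero>"
proof -
  have "sc 0 \<oplus> sc 0 = sc 0" using sc_add[of 0 0] by simp
  then show ?thesis using add.l_cancel_one[of "sc 0" "sc 0"] by simp
qed

lemma Ev_sup:
  assumes f: "f \<in> carrier (free_alg S')" and D: "finite D" "{w. f w \<noteq> 0} \<subseteq> D" "\<forall>w\<in>D. set w \<subseteq> S'"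
  shows "Ev f = (\<Oplus>w\<in>D. sc (f w) \<otimes> wimg w)"
  unfolding Ev_def
  by (rule add.finprod_mono_neutral_cong_left[unfolded finsum_def[symmetric]])
     (use D in \<open>auto simp: sc_zero wimg_closed\<close>)

lemma Ev_closed: "f \<in> carrier (free_alg S') \<Longrightarrow> Ev f \<in> carrier R"
  unfolding Ev_def by (rule finsum_closed) (auto simp: fa_carrier wimg_closed)

lemma Ev_add:
  assumes f: "f \<in> carrier (free_alg S')" and h: "h \<in> carrier (free_alg S')"
  shows "Ev (f \<oplus>\<^bsub>free_alg S'\<^esub> h) = Ev f \<oplus> Ev h"
proof -
  let ?D = "{w. f w \<noteq> 0} \<union> {w. h w \<noteq> 0}"
  have fin: "finite ?D" and sub: "\<forall>w\<in>?D. set w \<subseteq> S'" using f h by (auto simp: fa_carrier)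
  have fh: "f \<oplus>\<^bsub>free_alg S'\<^esub> h \<in> carrier (free_alg S')"
    using f h ring.ring_simprules(1)[OF fa_ring] by blast
  have "Ev (f \<oplus>\<^bsub>free_alg S'\<^esub> h) = (\<Oplus>w\<in>?D. sc ((f \<oplus>\<^bsub>free_alg S'\<^esub> h) w) \<otimes> wimg w)"
    by (rule Ev_sup[OF fh fin _ sub]) (auto simp: fa_add)
  also have "\<dots> = (\<Oplus>w\<in>?D. sc (f w) \<otimes> wimg w \<oplus> sc (h w) \<otimes> wimg w)"
    by (rule finsum_cong') (use sub in \<open>auto simp: fa_add sc_add l_distr wimg_closed\<close>)
  also have "\<dots> = (\<Oplus>w\<in>?D. sc (f w) \<otimes> wimg w) \<oplus> (\<Oplus>w\<in>?D. sc (h w) \<otimes> wimg w)"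
    by (rule finsum_addf) (use sub in \<open>auto simp: wimg_closed\<close>)
  also have "\<dots> = Ev f \<oplus> Ev h"
    using Ev_sup[OF f fin _ sub] Ev_sup[OF h fin _ sub] by auto
  finally show ?thesis .
qed

lemma Ev_zero: "Ev \<zero>\<^bsub>free_alg S'\<^esub> = \<zero>"
  by (simp add: Ev_def fa_zero)

lemma Ev_finsum:
  assumes "finite D" "F \<in> D \<rightarrow> carrier (free_alg S')"
  shows "Ev (finsum (free_alg S') F D) = (\<Oplus>d\<in>D. Ev (F d))"
  using assms
proof (induction D rule: finite_induct)
  case empty
  interpret A: ring "free_alg S'" by (rule fa_ring)
  show ?case by (simp add: Ev_zero)
next
  case (insert x D)
  interpret A: ring "free_alg S'" by (rule fa_ring)
  have "F x \<in> carrier (free_alg S')" "F \<in> D \<rightarrow> carrier (free_alg S')" using insert by auto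
  moreover have "finsum (free_alg S') F D \<in> carrier (free_alg S')"
    using A.finsum_closed insert by auto
  ultimately show ?case using insert
    by (simp add: Ev_add Ev_closed Pi_def)
qed

lemma Ev_mono:
  assumes "set u \<subseteq> S'" shows "Ev (mnm c u) = sc c \<otimes> wimg u"
proof (cases "c = 0")
  case True
  then have "{w. mnm c u w \<noteq> 0} = {}" by (auto simp: mnm_def)
  then show ?thesis using True assms by (simp add: Ev_def sc_zero wimg_closed)
next
  case False
  then have "{w. mnm c u w \<noteq> 0} = {u}" by (auto simp: mnm_def)
  then show ?thesis using assms by (simp add: Ev_def wimg_closed mnm_def)
qed

lemma Ev_mult:
  assumes f: "f \<in> carrier (free_alg S')" and h: "h \<in> carrier (free_alg S')"
  shows "Ev (f \<otimes>\<^bsub>free_alg S'\<^esub> h) = Ev f \<otimes> Ev h"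
proof -
  interpret A: ring "free_alg S'" by (rule fa_ring)
  let ?Df = "{w. f w \<noteq> 0}" and ?Dh = "{w. h w \<noteq> 0}"
  have finf: "finite ?Df" and subf: "\<forall>w\<in>?Df. set w \<subseteq> S'" using f by (auto simp: fa_carrier)
  have finh: "finite ?Dh" and subh: "\<forall>w\<in>?Dh. set w \<subseteq> S'" using h by (auto simp: fa_carrier)
  have subuv: "\<And>u v. u \<in> ?Df \<Longrightarrow> v \<in> ?Dh \<Longrightarrow> set (u @ v) \<subseteq> S'"
  proof -
    fix u v assume "u \<in> ?Df" "v \<in> ?Dh"
    then have "set u \<subseteq> S'" "set v \<subseteq> S'" using subf subh by auto
    then show "set (u @ v) \<subseteq> S'" by simp
  qed
  have wf: "\<And>u. u \<in> ?Df \<Longrightarrow> wimg u \<in> carrier R" using subf wimg_closed by blast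
  have wh: "\<And>u. u \<in> ?Dh \<Longrightarrow> wimg u \<in> carrier R" using subh wimg_closed by blast
  have cf: "(\<lambda>u. mnm (f u) u) \<in> ?Df \<rightarrow> carrier (free_alg S')" using subf by (auto intro: mnm_carrier)
  have ch: "(\<lambda>u. mnm (h u) u) \<in> ?Dh \<rightarrow> carrier (free_alg S')" using subh by (auto intro: mnm_carrier)
  have "f \<otimes>\<^bsub>free_alg S'\<^esub> h = finsum (free_alg S') (\<lambda>u. mnm (f u) u) ?Df \<otimes>\<^bsub>free_alg S'\<^esub> h"
    using fa_decomp[OF f] by simp
  also have "\<dots> = finsum (free_alg S') (\<lambda>u. mnm (f u) u \<otimes>\<^bsub>free_alg S'\<^esub> h) ?Df"
    by (rule A.finsum_ldistr[OF finf h cf])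
  also have "\<dots> = finsum (free_alg S') (\<lambda>u. finsum (free_alg S') (\<lambda>v. mnm (f u * h v) (u @ v)) ?Dh) ?Df"
  proof (rule A.finsum_cong')
    fix u assume u: "u \<in> ?Df"
    have "mnm (f u) u \<otimes>\<^bsub>free_alg S'\<^esub> h = mnm (f u) u \<otimes>\<^bsub>free_alg S'\<^esub> finsum (free_alg S') (\<lambda>v. mnm (h v) v) ?Dh"
      using fa_decomp[OF h] by simp
    also have "\<dots> = finsum (free_alg S') (\<lambda>v. mnm (f u) u \<otimes>\<^bsub>free_alg S'\<^esub> mnm (h v) v) ?Dh"
      by (rule A.finsum_rdistr[OF finh _ ch]) (use u subf in \<open>auto intro: mnm_carrier\<close>)
    finally show "mnm (f u) u \<otimes>\<^bsub>free_alg S'\<^esub> h = finsum (free_alg S') (\<lambda>v. mnm (f u * h v) (u @ v)) ?Dh"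
      by (simp add: mono_mult)
  next
    show "(\<lambda>u. finsum (free_alg S') (\<lambda>v. mnm (f u * h v) (u @ v)) ?Dh) \<in> ?Df \<rightarrow> carrier (free_alg S')"
    proof (intro Pi_I A.finsum_closed mnm_carrier)
      fix u v assume "u \<in> ?Df" "v \<in> ?Dh"
      then have "set u \<subseteq> S'" "set v \<subseteq> S'" using subf subh by auto
      then show "set (u @ v) \<subseteq> S'" by simp
    qed
  qed simp
  finally have eq: "f \<otimes>\<^bsub>free_alg S'\<^esub> h = \<dots>" .
  have "Ev (f \<otimes>\<^bsub>free_alg S'\<^esub> h) = (\<Oplus>u\<in>?Df. Ev (finsum (free_alg S') (\<lambda>v. mnm (f u * h v) (u @ v)) ?Dh))"
    unfolding eq
    by (rule Ev_finsum[OF finf]) (intro Pi_I A.finsum_closed mnm_carrier subuv; simp)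
  also have "\<dots> = (\<Oplus>u\<in>?Df. \<Oplus>v\<in>?Dh. (sc (f u) \<otimes> wimg u) \<otimes> (sc (h v) \<otimes> wimg v))"
  proof (rule finsum_cong')
    fix u assume u: "u \<in> ?Df"
    have "Ev (finsum (free_alg S') (\<lambda>v. mnm (f u * h v) (u @ v)) ?Dh) = (\<Oplus>v\<in>?Dh. Ev (mnm (f u * h v) (u @ v)))"
      by (rule Ev_finsum[OF finh]) (intro Pi_I mnm_carrier subuv; use u in simp)
    also have "\<dots> = (\<Oplus>v\<in>?Dh. (sc (f u) \<otimes> wimg u) \<otimes> (sc (h v) \<otimes> wimg v))"
    proof (rule finsum_cong')
      fix v assume v: "v \<in> ?Dh"
      have wu: "wimg u \<in> carrier R" and wv: "wimg v \<in> carrier R"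
        using u v subf subh by (auto intro: wimg_closed)
      have "Ev (mnm (f u * h v) (u @ v)) = sc (f u * h v) \<otimes> wimg (u @ v)"
        by (rule Ev_mono) (use u v subf subh in auto)
      also have "\<dots> = sc (f u) \<otimes> sc (h v) \<otimes> (wimg u \<otimes> wimg v)"
        using u v subf subh by (simp add: sc_mult wimg_append)
      also have "\<dots> = sc (f u) \<otimes> (sc (h v) \<otimes> wimg u) \<otimes> wimg v"
        using wu wv by (simp add: m_assoc)
      also have "\<dots> = sc (f u) \<otimes> (wimg u \<otimes> sc (h v)) \<otimes> wimg v"
        using wu by (simp add: sc_central)
      also have "\<dots> = (sc (f u) \<otimes> wimg u) \<otimes> (sc (h v) \<otimes> wimg v)"
        using wu wv by (simp add: m_assoc)
      finally show "Ev (mnm (f u * h v) (u @ v)) = (sc (f u) \<otimes> wimg u) \<otimes> (sc (h v) \<otimes> wimg v)" .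
    qed (use wf[OF u] in \<open>auto intro!: wh m_closed\<close>)
    finally show "Ev (finsum (free_alg S') (\<lambda>v. mnm (f u * h v) (u @ v)) ?Dh) = (\<Oplus>v\<in>?Dh. (sc (f u) \<otimes> wimg u) \<otimes> (sc (h v) \<otimes> wimg v))" .
  qed (auto intro!: finsum_closed m_closed simp: wf wh)
  also have "\<dots> = (\<Oplus>u\<in>?Df. (sc (f u) \<otimes> wimg u) \<otimes> Ev h)"
  proof (rule finsum_cong')
    fix u assume u: "u \<in> ?Df"
    show "(\<Oplus>v\<in>?Dh. (sc (f u) \<otimes> wimg u) \<otimes> (sc (h v) \<otimes> wimg v)) = (sc (f u) \<otimes> wimg u) \<otimes> Ev h"
      unfolding Ev_def
      by (rule finsum_rdistr[symmetric, OF finh]) (use u in \<open>auto intro!: m_closed simp: wf wh\<close>)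
  qed (use h in \<open>auto intro!: m_closed Ev_closed simp: wf wh\<close>)
  also have "\<dots> = Ev f \<otimes> Ev h"
    unfolding Ev_def[of f]
    by (rule finsum_ldistr[symmetric, OF finf]) (use h in \<open>auto intro!: m_closed Ev_closed simp: wf\<close>)
  finally show ?thesis .
qed

lemma Ev_hom: "Ev \<in> ring_hom (free_alg S') R"
proof (rule ring_hom_memI)
  show "Ev \<one>\<^bsub>free_alg S'\<^esub> = \<one>"
    by (simp add: one_mono Ev_mono sc_one wimg_def)
qed (auto simp: Ev_closed Ev_add Ev_mult)

lemma Ev_gen: "s \<in> S' \<Longrightarrow> Ev (gen s) = g s"
  by (simp add: gen_mono Ev_mono sc_one wimg_def g_closed)

lemma Ev_scal: "Ev (scal c) = sc c"
  by (simp add: scal_mono Ev_mono wimg_def)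

end



lemma quot_carrier_ex:
  "X \<in> carrier (A Quot I) \<Longrightarrow> \<exists>x\<in>carrier A. X = I +>\<^bsub>A\<^esub> x"
  by (auto simp: FactRing_def A_RCOSETS_def RCOSETS_def a_r_coset_def)

lemma quot_lift:
  assumes A: "ring A" and B: "ring B" and h: "h \<in> ring_hom A B" and I: "ideal I A"
    and ker: "\<forall>x\<in>I. h x = \<zero>\<^bsub>B\<^esub>"
  shows "\<exists>\<phi>. \<phi> \<in> ring_hom (A Quot I) B \<and> (\<forall>x\<in>carrier A. \<phi> (I +>\<^bsub>A\<^esub> x) = h x)"
proof -
  interpret A: ring A by (rule A)
  interpret B: ring B by (rule B)
  interpret I: ideal I A by (rule I)
  interpret H: ring_hom_ring A B h using A B h by (rule ring_hom_ringI2)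
  define \<phi> where "\<phi> X = h (SOME x. x \<in> X)" for X
  have key: "\<phi> (I +>\<^bsub>A\<^esub> x) = h x" if x: "x \<in> carrier A" for x
  proof -
    have "x \<in> I +>\<^bsub>A\<^esub> x" using x I.a_rcos_self by blast
    then have "(SOME y. y \<in> I +>\<^bsub>A\<^esub> x) \<in> I +>\<^bsub>A\<^esub> x" by (rule someI)
    then obtain i where i: "i \<in> I" and y: "(SOME y. y \<in> I +>\<^bsub>A\<^esub> x) = i \<oplus>\<^bsub>A\<^esub> x"
      by (auto simp: a_r_coset_def r_coset_def)
    have ic: "i \<in> carrier A" using i I.Icarr by blast
    show ?thesis unfolding \<phi>_def y using ker i ic x by (simp add: H.hom_add)
  qed
  have pi: "(+>\<^bsub>A\<^esub>) I \<in> ring_hom A (A Quot I)" by (rule I.rcos_ring_hom)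
  have "\<phi> \<in> ring_hom (A Quot I) B"
  proof (rule ring_hom_memI)
    fix X assume "X \<in> carrier (A Quot I)"
    then obtain x where x: "x \<in> carrier A" "X = I +>\<^bsub>A\<^esub> x" using quot_carrier_ex by blast
    show "\<phi> X \<in> carrier B" using x key by simp
  next
    fix X Y assume "X \<in> carrier (A Quot I)" "Y \<in> carrier (A Quot I)"
    then obtain x y where x: "x \<in> carrier A" "X = I +>\<^bsub>A\<^esub> x" and y: "y \<in> carrier A" "Y = I +>\<^bsub>A\<^esub> y"
      using quot_carrier_ex by metis
    have "X \<otimes>\<^bsub>A Quot I\<^esub> Y = I +>\<^bsub>A\<^esub> (x \<otimes>\<^bsub>A\<^esub> y)"
      using ring_hom_mult[OF pi x(1) y(1)] x y by simp
    then show "\<phi> (X \<otimes>\<^bsub>A Quot I\<^esub> Y) = \<phi> X \<otimes>\<^bsub>B\<^esub> \<phi> Y"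
      using key x y by simp
  next
    fix X Y assume "X \<in> carrier (A Quot I)" "Y \<in> carrier (A Quot I)"
    then obtain x y where x: "x \<in> carrier A" "X = I +>\<^bsub>A\<^esub> x" and y: "y \<in> carrier A" "Y = I +>\<^bsub>A\<^esub> y"
      using quot_carrier_ex by metis
    have "X \<oplus>\<^bsub>A Quot I\<^esub> Y = I +>\<^bsub>A\<^esub> (x \<oplus>\<^bsub>A\<^esub> y)"
      using ring_hom_add[OF pi x(1) y(1)] x y by simp
    then show "\<phi> (X \<oplus>\<^bsub>A Quot I\<^esub> Y) = \<phi> X \<oplus>\<^bsub>B\<^esub> \<phi> Y"
      using key x y by simp
  next
    have "\<one>\<^bsub>A Quot I\<^esub> = I +>\<^bsub>A\<^esub> \<one>\<^bsub>A\<^esub>" using ring_hom_one[OF pi] by simp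
    then show "\<phi> \<one>\<^bsub>A Quot I\<^esub> = \<one>\<^bsub>B\<^esub>" using key by simp
  qed
  then show ?thesis using key by blast
qed



context ring begin

lemma minus_eq_zero_iff: "x \<in> carrier R \<Longrightarrow> y \<in> carrier R \<Longrightarrow> x \<ominus> y = \<zero> \<longleftrightarrow> x = y"
proof
  assume x: "x \<in> carrier R" and y: "y \<in> carrier R" and e: "x \<ominus> y = \<zero>"
  have "x = (x \<ominus> y) \<oplus> y" using x y by algebra
  then show "x = y" using e y by simp
next
  assume x: "x \<in> carrier R" and y: "y \<in> carrier R" and e: "x = y"
  then show "x \<ominus> y = \<zero>" by (simp add: minus_eq r_neg)
qed

lemma quad_unit:
  assumes c: "T \<in> carrier R" "a \<in> carrier R" "b \<in> carrier R"
    and ca: "a \<otimes> T = T \<otimes> a" and cb: "b \<otimes> T = T \<otimes> b" and ab: "a \<otimes> b = \<one>"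
    and q: "(T \<ominus> a) \<otimes> (T \<oplus> b) = \<zero>"
  shows "T \<otimes> (T \<ominus> a \<oplus> b) = \<one>" "(T \<ominus> a \<oplus> b) \<otimes> T = \<one>"
proof -
  have e1: "(T \<ominus> a) \<otimes> (T \<oplus> b) = T \<otimes> (T \<ominus> a \<oplus> b) \<oplus> (T \<otimes> a \<ominus> a \<otimes> T) \<ominus> a \<otimes> b"
    using c by algebra
  have "T \<otimes> a \<ominus> a \<otimes> T = \<zero>" using c ca by (simp add: minus_eq_zero_iff)
  then have "T \<otimes> (T \<ominus> a \<oplus> b) \<ominus> \<one> = \<zero>" using e1 q ab c by simp
  then show 1: "T \<otimes> (T \<ominus> a \<oplus> b) = \<one>" using c by (simp add: minus_eq_zero_iff)
  have "(T \<ominus> a \<oplus> b) \<otimes> T = T \<otimes> T \<ominus> a \<otimes> T \<oplus> b \<otimes> T" using c by algebra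
  also have "\<dots> = T \<otimes> T \<ominus> T \<otimes> a \<oplus> T \<otimes> b" using ca cb by simp
  also have "\<dots> = T \<otimes> (T \<ominus> a \<oplus> b)" using c by algebra
  finally show "(T \<ominus> a \<oplus> b) \<otimes> T = \<one>" using 1 by simp
qed

definition cnj :: "'a \<Rightarrow> 'a \<Rightarrow> 'a" where "cnj u x = u \<otimes> x \<otimes> inv u"

lemma conj_closed: "u \<in> Units R \<Longrightarrow> x \<in> carrier R \<Longrightarrow> cnj u x \<in> carrier R"
  by (simp add: cnj_def Units_closed)

lemma conj_mult: "u \<in> Units R \<Longrightarrow> x \<in> carrier R \<Longrightarrow> y \<in> carrier R \<Longrightarrow> cnj u (x \<otimes> y) = cnj u x \<otimes> cnj u y"
proof -
  assume u: "u \<in> Units R" and x: "x \<in> carrier R" and y: "y \<in> carrier R"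
  have uc: "u \<in> carrier R" "inv u \<in> carrier R" using u by auto
  have "cnj u x \<otimes> cnj u y = u \<otimes> x \<otimes> (inv u \<otimes> u) \<otimes> y \<otimes> inv u"
    using uc x y by (simp add: cnj_def m_assoc)
  also have "\<dots> = cnj u (x \<otimes> y)" using u uc x y by (simp add: cnj_def m_assoc)
  finally show ?thesis by simp
qed

lemma conj_add: "u \<in> Units R \<Longrightarrow> x \<in> carrier R \<Longrightarrow> y \<in> carrier R \<Longrightarrow> cnj u (x \<oplus> y) = cnj u x \<oplus> cnj u y"
  unfolding cnj_def by (simp add: l_distr r_distr Units_closed)

lemma conj_minus: "u \<in> Units R \<Longrightarrow> x \<in> carrier R \<Longrightarrow> y \<in> carrier R \<Longrightarrow> cnj u (x \<ominus> y) = cnj u x \<ominus> cnj u y"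
  unfolding cnj_def minus_eq by (simp add: l_distr r_distr Units_closed l_minus r_minus)

lemma conj_central: "u \<in> Units R \<Longrightarrow> a \<in> carrier R \<Longrightarrow> u \<otimes> a = a \<otimes> u \<Longrightarrow> cnj u a = a"
  unfolding cnj_def by (simp add: m_assoc Units_closed)

lemma conj_zero: "u \<in> Units R \<Longrightarrow> cnj u \<zero> = \<zero>"
  unfolding cnj_def by (simp add: Units_closed)

lemma conj_one: "u \<in> Units R \<Longrightarrow> cnj u \<one> = \<one>"
  unfolding cnj_def by (simp add: Units_closed)

lemma inv_comm: "u \<in> Units R \<Longrightarrow> a \<in> carrier R \<Longrightarrow> u \<otimes> a = a \<otimes> u \<Longrightarrow> inv u \<otimes> a = a \<otimes> inv u"
proof -
  assume u: "u \<in> Units R" and a: "a \<in> carrier R" and c: "u \<otimes> a = a \<otimes> u"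
  have uc: "u \<in> carrier R" "inv u \<in> carrier R" using u by auto
  have "inv u \<otimes> a = inv u \<otimes> a \<otimes> (u \<otimes> inv u)" using u uc a by simp
  also have "\<dots> = inv u \<otimes> (a \<otimes> u) \<otimes> inv u" using uc a by (simp add: m_assoc)
  also have "\<dots> = inv u \<otimes> (u \<otimes> a) \<otimes> inv u" using c by simp
  also have "\<dots> = (inv u \<otimes> u) \<otimes> a \<otimes> inv u" using uc a by (simp add: m_assoc)
  also have "\<dots> = a \<otimes> inv u" using u uc a by simp
  finally show ?thesis .
qed

lemma conj_foldr:
  assumes u: "u \<in> Units R" and H: "\<forall>s\<in>set w. H s \<in> carrier R" and G: "\<forall>s\<in>set w. G s = cnj u (H s)"
  shows "foldr (\<lambda>s z. G s \<otimes> z) w \<one> = cnj u (foldr (\<lambda>s z. H s \<otimes> z) w \<one>)"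
  using H G
proof (induction w)
  case Nil then show ?case using u by (simp add: conj_one)
next
  case (Cons a w)
  have "foldr (\<lambda>s z. H s \<otimes> z) w \<one> \<in> carrier R"
    using Cons.prems(1) by (induction w) auto
  then show ?case using Cons u by (simp add: conj_mult)
qed

end



lemma gen_carrier: "s \<in> S \<Longrightarrow> gen s \<in> carrier (free_alg S)"
  unfolding gen_mono by (rule mnm_carrier) simp

lemma scal_carrier: "scal c \<in> carrier (free_alg S)"
  unfolding scal_mono by (rule mnm_carrier) simp

lemma word_prod_Cons: "word_prod S (s # w) = gen s \<otimes>\<^bsub>free_alg S\<^esub> word_prod S w"
  by (simp add: word_prod_def)

lemma word_prod_Nil: "word_prod S [] = \<one>\<^bsub>free_alg S\<^esub>"
  by (simp add: word_prod_def)

lemma word_prod_carrier: "set w \<subseteq> S \<Longrightarrow> word_prod S w \<in> carrier (free_alg S)"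
proof (induction w)
  case Nil then show ?case using ring.ring_simprules(6)[OF fa_ring] by (simp add: word_prod_Nil)
next
  case (Cons a w)
  then have "gen a \<in> carrier (free_alg S)" "word_prod S w \<in> carrier (free_alg S)"
    by (auto intro: gen_carrier)
  then show ?case
    using ring.ring_simprules(5)[OF fa_ring] by (simp add: word_prod_Cons)
qed

lemma alt_word_set: "set (alt_word s t m) \<subseteq> {s, t}"
  by (auto simp: alt_word_def)

lemma hecke_rels_carrier: "hecke_rels S M L \<subseteq> carrier (free_alg S)"
proof -
  interpret A: ring "free_alg S" by (rule fa_ring)
  show ?thesis
  proof
    fix r assume "r \<in> hecke_rels S M L"
    then consider (q) s where "s \<in> S" "r = (gen s \<ominus>\<^bsub>free_alg S\<^esub> scal (vpow (L s))) \<otimes>\<^bsub>free_alg S\<^esub> (gen s \<oplus>\<^bsub>free_alg S\<^esub> scal (vpow (- L s)))"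
      | (b) s t m where "s \<in> S" "t \<in> S" "r = word_prod S (alt_word s t m) \<ominus>\<^bsub>free_alg S\<^esub> word_prod S (alt_word t s m)"
      unfolding hecke_rels_def by blast
    then show "r \<in> carrier (free_alg S)"
    proof cases
      case q then show ?thesis by (simp add: gen_carrier scal_carrier)
    next
      case b
      have "set (alt_word s t m) \<subseteq> S" "set (alt_word t s m) \<subseteq> S"
        using alt_word_set[of s t m] alt_word_set[of t s m] b by auto
      then show ?thesis using b by (simp add: word_prod_carrier)
    qed
  qed
qed

lemma hecke_ideal_ideal: "ideal (hecke_ideal S M L) (free_alg S)"
  unfolding hecke_ideal_def by (rule ring.genideal_ideal[OF fa_ring hecke_rels_carrier])

lemma hecke_ring: "ring (hecke S M L)"
  unfolding hecke_def by (rule ideal.quotient_is_ring[OF hecke_ideal_ideal])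

lemma pi_hom: "ring_hom_ring (free_alg S) (hecke S M L) ((+>\<^bsub>free_alg S\<^esub>) (hecke_ideal S M L))"
  unfolding hecke_def by (rule ideal.rcos_ring_hom_ring[OF hecke_ideal_ideal])

lemma rel_zero: "r \<in> hecke_rels S M L \<Longrightarrow> hecke_ideal S M L +>\<^bsub>free_alg S\<^esub> r = \<zero>\<^bsub>hecke S M L\<^esub>"
proof -
  assume r: "r \<in> hecke_rels S M L"
  have "r \<in> hecke_ideal S M L"
    using ring.genideal_self[OF fa_ring hecke_rels_carrier] r unfolding hecke_ideal_def by blast
  interpret I: ideal "hecke_ideal S M L" "free_alg S" by (rule hecke_ideal_ideal)
  from \<open>r \<in> hecke_ideal S M L\<close> show ?thesis
    by (simp add: I.a_rcos_const hecke_def FactRing_def)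
qed

lemma scal_add: "scal (c + d) = scal c \<oplus>\<^bsub>free_alg S\<^esub> scal d"
  by (auto simp: scal_def fa_add)

lemma scal_mult: "scal (c * d) = scal c \<otimes>\<^bsub>free_alg S\<^esub> scal d"
  by (simp add: scal_mono mono_mult)

lemma scal_one: "scal 1 = \<one>\<^bsub>free_alg S\<^esub>"
  by (simp add: scal_mono one_mono)

lemma scal_central: "scal c \<otimes>\<^bsub>free_alg S\<^esub> x = x \<otimes>\<^bsub>free_alg S\<^esub> scal c"
proof (rule ext)
  fix w
  have l: "(\<Sum>i\<le>length w. scal c (take i w) * x (drop i w)) = (\<Sum>i\<le>length w. if i = 0 then c * x w else 0)"
    by (rule sum.cong) (auto simp: scal_def)
  have r: "(\<Sum>i\<le>length w. x (take i w) * scal c (drop i w)) = (\<Sum>i\<le>length w. if i = length w then x w * c else 0)"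
    by (rule sum.cong) (auto simp: scal_def)
  show "(scal c \<otimes>\<^bsub>free_alg S\<^esub> x) w = (x \<otimes>\<^bsub>free_alg S\<^esub> scal c) w"
    unfolding fa_mult using l r by (simp add: mult.commute)
qed

lemma vpow_mult: "vpow a * vpow b = vpow (a + b)"
  by (simp add: vpow_def mult_single)

lemma vpow_zero: "vpow 0 = 1"
  by (simp add: vpow_def)



lemma map_alt_word: "map f (alt_word a b m) = alt_word (f a) (f b) m"
  by (simp add: alt_word_def)

lemma contr_edge_cases:
  assumes "contr_edge_val M sp sm a = enat m"
  shows "(M a sp = 2 \<and> M a sm = enat m) \<or> (M a sm = 2 \<and> M a sp = enat m)"
proof -
  have c: "M a sp = 2 \<or> M a sm = 2" and e: "M a sp + M a sm - 2 = enat m"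
    using assms by (auto simp: contr_edge_val_def split: if_splits)
  show ?thesis
  proof (cases "M a sp = 2")
    case True
    then have "2 + M a sm - 2 = enat m" using e by simp
    then have "M a sm = enat m"
      by (cases "M a sm") (auto simp: numeral_eq_enat)
    then show ?thesis using True by simp
  next
    case False
    then have t: "M a sm = 2" using c by simp
    then have "M a sp + 2 - 2 = enat m" using e by simp
    then have "M a sp = enat m"
      by (cases "M a sp") (auto simp: numeral_eq_enat)
    then show ?thesis using t by simp
  qed
qed



locale mctx =
  fixes S :: "'s set" and M :: "'s \<Rightarrow> 's \<Rightarrow> enat" and L :: "'s \<Rightarrow> int" and sp sm :: 's
  assumes cm: "coxeter_matrix S M" and wfn: "weight_function S M L"
    and sp: "sp \<in> S" and sm: "sm \<in> S" and m3: "M sp sm = 3"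
begin

sublocale R: ring "hecke S M L" by (rule hecke_ring)
sublocale P: ring_hom_ring "free_alg S" "hecke S M L" "(+>\<^bsub>free_alg S\<^esub>) (hecke_ideal S M L)"
  by (rule pi_hom)

abbreviation "RR \<equiv> hecke S M L"
abbreviation "\<pi> \<equiv> (+>\<^bsub>free_alg S\<^esub>) (hecke_ideal S M L)"
abbreviation "T \<equiv> hT S M L"
abbreviation "hs \<equiv> hscal S M L"
abbreviation "W w \<equiv> foldr (\<lambda>s x. T s \<otimes>\<^bsub>RR\<^esub> x) w \<one>\<^bsub>RR\<^esub>"

lemma T_pi: "T s = \<pi> (gen s)" by (simp add: hT_def)
lemma hs_pi: "hs c = \<pi> (scal c)" by (simp add: hscal_def)

lemma T_closed: "s \<in> S \<Longrightarrow> T s \<in> carrier RR"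
  by (simp add: T_pi gen_carrier)

lemma hs_closed: "hs c \<in> carrier RR"
  by (simp add: hs_pi scal_carrier)

lemma hs_add: "hs (c + d) = hs c \<oplus>\<^bsub>RR\<^esub> hs d"
  by (simp add: hs_pi scal_add[of c d S] scal_carrier)

lemma hs_mult: "hs (c * d) = hs c \<otimes>\<^bsub>RR\<^esub> hs d"
  by (simp add: hs_pi scal_mult[of c d S] scal_carrier)

lemma hs_one: "hs 1 = \<one>\<^bsub>RR\<^esub>"
  by (simp add: hs_pi scal_one[of S])

lemma hs_central: "X \<in> carrier RR \<Longrightarrow> hs c \<otimes>\<^bsub>RR\<^esub> X = X \<otimes>\<^bsub>RR\<^esub> hs c"
proof -
  assume "X \<in> carrier RR"
  then obtain x where x: "x \<in> carrier (free_alg S)" "X = \<pi> x"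
    unfolding hecke_def using quot_carrier_ex by blast
  then show ?thesis
    by (simp add: hs_pi scal_carrier flip: P.hom_mult) (simp add: scal_central)
qed

lemma W_pi: "set w \<subseteq> S \<Longrightarrow> \<pi> (word_prod S w) = W w"
proof (induction w)
  case Nil then show ?case by (simp add: word_prod_Nil)
next
  case (Cons a w)
  then show ?case by (simp add: word_prod_Cons gen_carrier word_prod_carrier T_pi)
qed

lemma pi_minus: "x \<in> carrier (free_alg S) \<Longrightarrow> y \<in> carrier (free_alg S) \<Longrightarrow> \<pi> (x \<ominus>\<^bsub>free_alg S\<^esub> y) = \<pi> x \<ominus>\<^bsub>RR\<^esub> \<pi> y"
  by (simp add: a_minus_def)

lemma Q: "s \<in> S \<Longrightarrow> (T s \<ominus>\<^bsub>RR\<^esub> hs (vpow (L s))) \<otimes>\<^bsub>RR\<^esub> (T s \<oplus>\<^bsub>RR\<^esub> hs (vpow (- L s))) = \<zero>\<^bsub>RR\<^esub>"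
proof -
  assume s: "s \<in> S"
  let ?r = "(gen s \<ominus>\<^bsub>free_alg S\<^esub> scal (vpow (L s))) \<otimes>\<^bsub>free_alg S\<^esub> (gen s \<oplus>\<^bsub>free_alg S\<^esub> scal (vpow (- L s)))"
  have "?r \<in> hecke_rels S M L" unfolding hecke_rels_def using s by blast
  then have "\<pi> ?r = \<zero>\<^bsub>RR\<^esub>" by (rule rel_zero)
  moreover have "\<pi> ?r = (T s \<ominus>\<^bsub>RR\<^esub> hs (vpow (L s))) \<otimes>\<^bsub>RR\<^esub> (T s \<oplus>\<^bsub>RR\<^esub> hs (vpow (- L s)))"
    using s by (simp add: gen_carrier scal_carrier pi_minus T_pi hs_pi)
  ultimately show ?thesis by simp
qed

lemma Bd: "s \<in> S \<Longrightarrow> t \<in> S \<Longrightarrow> s \<noteq> t \<Longrightarrow> M s t = enat m \<Longrightarrow> W (alt_word s t m) = W (alt_word t s m)"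
proof -
  assume st: "s \<in> S" "t \<in> S" "s \<noteq> t" "M s t = enat m"
  let ?r = "word_prod S (alt_word s t m) \<ominus>\<^bsub>free_alg S\<^esub> word_prod S (alt_word t s m)"
  have "?r \<in> hecke_rels S M L" unfolding hecke_rels_def using st by blast
  then have z: "\<pi> ?r = \<zero>\<^bsub>RR\<^esub>" by (rule rel_zero)
  have ws: "set (alt_word s t m) \<subseteq> S" "set (alt_word t s m) \<subseteq> S"
    using alt_word_set[of s t m] alt_word_set[of t s m] st by auto
  have "\<pi> ?r = W (alt_word s t m) \<ominus>\<^bsub>RR\<^esub> W (alt_word t s m)"
    using ws by (simp add: pi_minus word_prod_carrier W_pi)
  then have "W (alt_word s t m) \<ominus>\<^bsub>RR\<^esub> W (alt_word t s m) = \<zero>\<^bsub>RR\<^esub>" using z by simp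
  moreover have "W (alt_word s t m) \<in> carrier RR" "W (alt_word t s m) \<in> carrier RR"
    using ws by (simp_all add: word_prod_carrier flip: W_pi)
  ultimately show ?thesis using R.minus_eq_zero_iff by blast
qed

lemma T_unit: "s \<in> S \<Longrightarrow> T s \<in> Units RR"
proof -
  assume s: "s \<in> S"
  let ?a = "hs (vpow (L s))" and ?b = "hs (vpow (- L s))"
  have ab: "?a \<otimes>\<^bsub>RR\<^esub> ?b = \<one>\<^bsub>RR\<^esub>"
    by (simp flip: hs_mult add: vpow_mult vpow_zero hs_one)
  have c: "T s \<in> carrier RR" "?a \<in> carrier RR" "?b \<in> carrier RR" using s by (auto simp: T_closed hs_closed)
  note qu = R.quad_unit[OF c hs_central[OF c(1)] hs_central[OF c(1)] ab Q[OF s]]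
  have "T s \<ominus>\<^bsub>RR\<^esub> ?a \<oplus>\<^bsub>RR\<^esub> ?b \<in> carrier RR" using c by simp
  then show ?thesis using qu c(1) unfolding Units_def by blast
qed

lemma sp_ne_sm: "sp \<noteq> sm"
proof
  assume e: "sp = sm"
  have "M sp sm = 1 \<longleftrightarrow> sp = sm" using cm sp sm unfolding coxeter_matrix_def by blast
  then have "M sp sm = 1" using e by simp
  then show False using m3 by simp
qed

lemma L_eq: "L sm = L sp"
proof -
  have ne: "sp \<noteq> sm" by (rule sp_ne_sm)
  have e1: "cox_eq S M ([sp, sm] @ [sm, sp]) []"
  proof -
    have "cox_eq S M ([sp] @ [sm, sm] @ [sp]) ([sp] @ [sp])" by (rule cox_eq.invol[OF sm])
    moreover have "cox_eq S M ([] @ [sp, sp] @ []) ([] @ [])" by (rule cox_eq.invol[OF sp])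
    ultimately show ?thesis by (auto intro: cox_eq.trans)
  qed
  have e2: "cox_eq S M ([sp, sm] @ [sp] @ [sm, sp]) [sm]"
  proof -
    have "cox_eq S M ([] @ alt_word sp sm 3 @ [sm, sp]) ([] @ alt_word sm sp 3 @ [sm, sp])"
      by (rule cox_eq.braid[OF sp sm ne]) (simp add: m3 numeral_eq_enat)
    then have a: "cox_eq S M [sp, sm, sp, sm, sp] [sm, sp, sm, sm, sp]"
      by (simp add: alt_word_def numeral_3_eq_3)
    have "cox_eq S M ([sm, sp] @ [sm, sm] @ [sp]) ([sm, sp] @ [sp])" by (rule cox_eq.invol[OF sm])
    then have b: "cox_eq S M [sm, sp, sm, sm, sp] [sm, sp, sp]" by simp
    have "cox_eq S M ([sm] @ [sp, sp] @ []) ([sm] @ [])" by (rule cox_eq.invol[OF sp])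
    then have c: "cox_eq S M [sm, sp, sp] [sm]" by simp
    from a b c show ?thesis by (auto intro: cox_eq.trans)
  qed
  have "cox_conjugate S M sp sm"
    unfolding cox_conjugate_def
    by (rule bexI[of _ "[sp, sm]"], rule bexI[of _ "[sm, sp]"]) (use e1 e2 sp sm in auto)
  then show ?thesis using wfn sp sm unfolding weight_function_def by auto
qed

end



context mctx begin

abbreviation "S' \<equiv> contr_set S sp sm"
abbreviation "M' \<equiv> contr_matrix M sp sm"
abbreviation "L' \<equiv> contr_weight L sp"

definition T0 where "T0 = T sp \<otimes>\<^bsub>RR\<^esub> T sm \<otimes>\<^bsub>RR\<^esub> inv\<^bsub>RR\<^esub> (T sp)"
definition gg where "gg x = (case x of None \<Rightarrow> T0 | Some s \<Rightarrow> T s)"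

lemma Tp: "T sp \<in> Units RR" using T_unit sp by blast
lemma Tm: "T sm \<in> Units RR" using T_unit sm by blast

lemma T0_conj: "T0 = R.cnj (T sp) (T sm)" by (simp add: T0_def R.cnj_def)

lemma braid3: "T sp \<otimes>\<^bsub>RR\<^esub> T sm \<otimes>\<^bsub>RR\<^esub> T sp = T sm \<otimes>\<^bsub>RR\<^esub> T sp \<otimes>\<^bsub>RR\<^esub> T sm"
proof -
  have "W (alt_word sp sm 3) = W (alt_word sm sp 3)"
    by (rule Bd[OF sp sm sp_ne_sm]) (simp add: m3 numeral_eq_enat)
  then show ?thesis using T_closed sp sm by (simp add: alt_word_def numeral_3_eq_3 R.m_assoc)
qed

lemma T0_conj2: "T0 = R.cnj (inv\<^bsub>RR\<^esub> (T sm)) (T sp)"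
proof -
  have cp: "T sp \<in> carrier RR" "inv\<^bsub>RR\<^esub> (T sp) \<in> carrier RR" using Tp by auto
  have cm': "T sm \<in> carrier RR" "inv\<^bsub>RR\<^esub> (T sm) \<in> carrier RR" using Tm by auto
  have "inv\<^bsub>RR\<^esub> (T sm) \<otimes>\<^bsub>RR\<^esub> (T sp \<otimes>\<^bsub>RR\<^esub> T sm \<otimes>\<^bsub>RR\<^esub> T sp) \<otimes>\<^bsub>RR\<^esub> inv\<^bsub>RR\<^esub> (T sp)
      = inv\<^bsub>RR\<^esub> (T sm) \<otimes>\<^bsub>RR\<^esub> T sp \<otimes>\<^bsub>RR\<^esub> T sm \<otimes>\<^bsub>RR\<^esub> (T sp \<otimes>\<^bsub>RR\<^esub> inv\<^bsub>RR\<^esub> (T sp))"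
    using cp cm' by (simp add: R.m_assoc)
  also have "\<dots> = inv\<^bsub>RR\<^esub> (T sm) \<otimes>\<^bsub>RR\<^esub> T sp \<otimes>\<^bsub>RR\<^esub> T sm" using Tp cp cm' by simp
  finally have 1: "inv\<^bsub>RR\<^esub> (T sm) \<otimes>\<^bsub>RR\<^esub> (T sp \<otimes>\<^bsub>RR\<^esub> T sm \<otimes>\<^bsub>RR\<^esub> T sp) \<otimes>\<^bsub>RR\<^esub> inv\<^bsub>RR\<^esub> (T sp)
      = inv\<^bsub>RR\<^esub> (T sm) \<otimes>\<^bsub>RR\<^esub> T sp \<otimes>\<^bsub>RR\<^esub> T sm" .
  have "inv\<^bsub>RR\<^esub> (T sm) \<otimes>\<^bsub>RR\<^esub> (T sm \<otimes>\<^bsub>RR\<^esub> T sp \<otimes>\<^bsub>RR\<^esub> T sm) \<otimes>\<^bsub>RR\<^esub> inv\<^bsub>RR\<^esub> (T sp)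
      = (inv\<^bsub>RR\<^esub> (T sm) \<otimes>\<^bsub>RR\<^esub> T sm) \<otimes>\<^bsub>RR\<^esub> T sp \<otimes>\<^bsub>RR\<^esub> T sm \<otimes>\<^bsub>RR\<^esub> inv\<^bsub>RR\<^esub> (T sp)"
    using cp cm' by (simp add: R.m_assoc)
  also have "\<dots> = T0" using Tm cp cm' by (simp add: T0_def)
  finally have 2: "inv\<^bsub>RR\<^esub> (T sm) \<otimes>\<^bsub>RR\<^esub> (T sm \<otimes>\<^bsub>RR\<^esub> T sp \<otimes>\<^bsub>RR\<^esub> T sm) \<otimes>\<^bsub>RR\<^esub> inv\<^bsub>RR\<^esub> (T sp) = T0" .
  have "R.cnj (inv\<^bsub>RR\<^esub> (T sm)) (T sp) = inv\<^bsub>RR\<^esub> (T sm) \<otimes>\<^bsub>RR\<^esub> T sp \<otimes>\<^bsub>RR\<^esub> T sm"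
    using Tm by (simp add: R.cnj_def)
  then show ?thesis using 1 2 braid3 by simp
qed

lemma T0_closed: "T0 \<in> carrier RR"
  using Tp Tm by (simp add: T0_def R.Units_closed)

lemma gg_closed: "x \<in> S' \<Longrightarrow> gg x \<in> carrier RR"
  by (auto simp: gg_def contr_set_def T0_closed T_closed)

sublocale E: evalctx RR S' hs gg
  by (intro evalctx.intro evalctx_axioms.intro hecke_ring hs_closed hs_add hs_mult hs_one hs_central gg_closed)

lemma comm2: "s \<in> S \<Longrightarrow> t \<in> S \<Longrightarrow> s \<noteq> t \<Longrightarrow> M s t = 2 \<Longrightarrow> T t \<otimes>\<^bsub>RR\<^esub> T s = T s \<otimes>\<^bsub>RR\<^esub> T t"
proof -
  assume st: "s \<in> S" "t \<in> S" "s \<noteq> t" "M s t = 2"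
  have "W (alt_word s t 2) = W (alt_word t s 2)"
    by (rule Bd[OF st(1-3)]) (simp add: st(4) numeral_eq_enat)
  then show ?thesis using T_closed st by (simp add: alt_word_def numeral_2_eq_2)
qed

lemma conj_word:
  assumes u: "u \<in> Units RR" and f: "\<forall>x\<in>set w. f x \<in> S" and G: "\<forall>x\<in>set w. gg x = R.cnj u (T (f x))"
  shows "foldr (\<lambda>s z. gg s \<otimes>\<^bsub>RR\<^esub> z) w \<one>\<^bsub>RR\<^esub> = R.cnj u (W (map f w))"
proof -
  have "foldr (\<lambda>s z. gg s \<otimes>\<^bsub>RR\<^esub> z) w \<one>\<^bsub>RR\<^esub> = R.cnj u (foldr (\<lambda>s z. T (f s) \<otimes>\<^bsub>RR\<^esub> z) w \<one>\<^bsub>RR\<^esub>)"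
    by (rule R.conj_foldr[OF u]) (use f G T_closed in auto)
  then show ?thesis by (simp add: foldr_map comp_def)
qed

lemma braid_none:
  assumes a: "a \<in> S" "a \<noteq> sp" "a \<noteq> sm" and e: "contr_edge_val M sp sm a = enat m"
  shows "E.wimg (alt_word None (Some a) m) = E.wimg (alt_word (Some a) None m)"
proof -
  have sym: "\<And>x y. x \<in> S \<Longrightarrow> y \<in> S \<Longrightarrow> M x y = M y x" using cm unfolding coxeter_matrix_def by blast
  have setw: "set (alt_word None (Some a) m) \<subseteq> {None, Some a}" "set (alt_word (Some a) None m) \<subseteq> {None, Some a}"
    using alt_word_set[of None "Some a" m] alt_word_set[of "Some a" None m] by auto
  from contr_edge_cases[OF e] show ?thesis
  proof
    assume c: "M a sp = 2 \<and> M a sm = enat m"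
    define f where "f x = (case x of None \<Rightarrow> sm | Some s \<Rightarrow> s)" for x
    have cp: "T sp \<otimes>\<^bsub>RR\<^esub> T a = T a \<otimes>\<^bsub>RR\<^esub> T sp" using comm2[OF a(1) sp a(2)] c by simp
    have ga: "gg (Some a) = R.cnj (T sp) (T a)"
      using R.conj_central[OF Tp T_closed[OF a(1)] cp] by (simp add: gg_def)
    have gn: "gg None = R.cnj (T sp) (T sm)" by (simp add: gg_def T0_conj)
    have G: "\<forall>x\<in>{None, Some a}. gg x = R.cnj (T sp) (T (f x))" using ga gn by (simp add: f_def)
    have F: "\<forall>x\<in>{None, Some a}. f x \<in> S" using a sm by (simp add: f_def)
    have "E.wimg (alt_word None (Some a) m) = R.cnj (T sp) (W (alt_word sm a m))"
      proof -
      have F1: "\<forall>x\<in>set (alt_word None (Some a) m). f x \<in> S" using F setw(1) by blast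
      have G1: "\<forall>x\<in>set (alt_word None (Some a) m). gg x = R.cnj (T sp) (T (f x))" using G setw(1) by blast
      show ?thesis unfolding E.wimg_def conj_word[OF Tp F1 G1] by (simp add: map_alt_word f_def)
    qed
    also have "W (alt_word sm a m) = W (alt_word a sm m)"
      by (rule Bd[OF sm a(1)]) (use a c sym[OF sm a(1)] in auto)
    also have "R.cnj (T sp) (W (alt_word a sm m)) = E.wimg (alt_word (Some a) None m)"
      proof -
      have F1: "\<forall>x\<in>set (alt_word (Some a) None m). f x \<in> S" using F setw(2) by blast
      have G1: "\<forall>x\<in>set (alt_word (Some a) None m). gg x = R.cnj (T sp) (T (f x))" using G setw(2) by blast
      show ?thesis unfolding E.wimg_def conj_word[OF Tp F1 G1] by (simp add: map_alt_word f_def)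
    qed
    finally show ?thesis .
  next
    assume c: "M a sm = 2 \<and> M a sp = enat m"
    define f where "f x = (case x of None \<Rightarrow> sp | Some s \<Rightarrow> s)" for x
    have iu: "inv\<^bsub>RR\<^esub> (T sm) \<in> Units RR" using Tm by simp
    have cm2: "T sm \<otimes>\<^bsub>RR\<^esub> T a = T a \<otimes>\<^bsub>RR\<^esub> T sm" using comm2[OF a(1) sm a(3)] c by simp
    have cp: "inv\<^bsub>RR\<^esub> (T sm) \<otimes>\<^bsub>RR\<^esub> T a = T a \<otimes>\<^bsub>RR\<^esub> inv\<^bsub>RR\<^esub> (T sm)"
      by (rule R.inv_comm[OF Tm T_closed[OF a(1)] cm2])
    have ga: "gg (Some a) = R.cnj (inv\<^bsub>RR\<^esub> (T sm)) (T a)"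
      using R.conj_central[OF iu T_closed[OF a(1)] cp] by (simp add: gg_def)
    have gn: "gg None = R.cnj (inv\<^bsub>RR\<^esub> (T sm)) (T sp)" by (simp add: gg_def T0_conj2)
    have G: "\<forall>x\<in>{None, Some a}. gg x = R.cnj (inv\<^bsub>RR\<^esub> (T sm)) (T (f x))" using ga gn by (simp add: f_def)
    have F: "\<forall>x\<in>{None, Some a}. f x \<in> S" using a sp by (simp add: f_def)
    have "E.wimg (alt_word None (Some a) m) = R.cnj (inv\<^bsub>RR\<^esub> (T sm)) (W (alt_word sp a m))"
      proof -
      have F1: "\<forall>x\<in>set (alt_word None (Some a) m). f x \<in> S" using F setw(1) by blast
      have G1: "\<forall>x\<in>set (alt_word None (Some a) m). gg x = R.cnj (inv\<^bsub>RR\<^esub> (T sm)) (T (f x))" using G setw(1) by blast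
      show ?thesis unfolding E.wimg_def conj_word[OF iu F1 G1] by (simp add: map_alt_word f_def)
    qed
    also have "W (alt_word sp a m) = W (alt_word a sp m)"
      by (rule Bd[OF sp a(1)]) (use a c sym[OF sp a(1)] in auto)
    also have "R.cnj (inv\<^bsub>RR\<^esub> (T sm)) (W (alt_word a sp m)) = E.wimg (alt_word (Some a) None m)"
      proof -
      have F1: "\<forall>x\<in>set (alt_word (Some a) None m). f x \<in> S" using F setw(2) by blast
      have G1: "\<forall>x\<in>set (alt_word (Some a) None m). gg x = R.cnj (inv\<^bsub>RR\<^esub> (T sm)) (T (f x))" using G setw(2) by blast
      show ?thesis unfolding E.wimg_def conj_word[OF iu F1 G1] by (simp add: map_alt_word f_def)
    qed
    finally show ?thesis .
  qed
qed

end



context mctx begin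

sublocale EH: ring_hom_ring "free_alg S'" RR E.Ev
  by (rule ring_hom_ringI2[OF fa_ring hecke_ring E.Ev_hom])

lemma Ev_word: "set w \<subseteq> S' \<Longrightarrow> E.Ev (word_prod S' w) = E.wimg w"
proof (induction w)
  case Nil then show ?case by (simp add: word_prod_Nil E.wimg_def)
next
  case (Cons a w)
  then show ?case
    by (simp add: word_prod_Cons gen_carrier word_prod_carrier E.Ev_gen E.wimg_def)
qed

lemma plain_word: "\<forall>x\<in>set w. gg x = T (f x) \<Longrightarrow> E.wimg w = W (map f w)"
  by (induction w) (auto simp: E.wimg_def)

lemma in_S'_Some: "Some s \<in> S' \<longleftrightarrow> s \<in> S - {sp, sm}"
  by (auto simp: contr_set_def)

lemma None_in_S': "None \<in> S'" by (simp add: contr_set_def)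

lemma Ev_rels: "r \<in> hecke_rels S' M' L' \<Longrightarrow> E.Ev r = \<zero>\<^bsub>RR\<^esub>"
proof -
  assume "r \<in> hecke_rels S' M' L'"
  then consider (q) x where "x \<in> S'" "r = (gen x \<ominus>\<^bsub>free_alg S'\<^esub> scal (vpow (L' x))) \<otimes>\<^bsub>free_alg S'\<^esub> (gen x \<oplus>\<^bsub>free_alg S'\<^esub> scal (vpow (- L' x)))"
    | (b) x y m where "x \<in> S'" "y \<in> S'" "x \<noteq> y" "M' x y = enat m"
        "r = word_prod S' (alt_word x y m) \<ominus>\<^bsub>free_alg S'\<^esub> word_prod S' (alt_word y x m)"
    unfolding hecke_rels_def by blast
  then show ?thesis
  proof cases
    case q
    have ev: "E.Ev r = (gg x \<ominus>\<^bsub>RR\<^esub> hs (vpow (L' x))) \<otimes>\<^bsub>RR\<^esub> (gg x \<oplus>\<^bsub>RR\<^esub> hs (vpow (- L' x)))"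
      using q by (simp add: gen_carrier scal_carrier a_minus_def E.Ev_gen E.Ev_scal)
    show ?thesis
    proof (cases x)
      case None
      let ?a = "hs (vpow (L sm))" and ?b = "hs (vpow (- L sm))"
      have ca: "R.cnj (T sp) ?a = ?a" "R.cnj (T sp) ?b = ?b"
        using R.conj_central[OF Tp hs_closed hs_central[OF R.Units_closed[OF Tp], symmetric]] by auto
      have cm': "T sm \<in> carrier RR" using Tm by auto
      have "E.Ev r = (R.cnj (T sp) (T sm) \<ominus>\<^bsub>RR\<^esub> R.cnj (T sp) ?a) \<otimes>\<^bsub>RR\<^esub> (R.cnj (T sp) (T sm) \<oplus>\<^bsub>RR\<^esub> R.cnj (T sp) ?b)"
        using ev None ca by (simp add: gg_def T0_conj L_eq)
      also have "\<dots> = R.cnj (T sp) ((T sm \<ominus>\<^bsub>RR\<^esub> ?a) \<otimes>\<^bsub>RR\<^esub> (T sm \<oplus>\<^bsub>RR\<^esub> ?b))"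
        using cm' by (simp add: R.conj_mult[OF Tp] R.conj_add[OF Tp] R.conj_minus[OF Tp] hs_closed)
      also have "\<dots> = \<zero>\<^bsub>RR\<^esub>" using Q[OF sm] R.conj_zero[OF Tp] by simp
      finally show ?thesis .
    next
      case (Some s)
      then have "s \<in> S" using q(1) in_S'_Some by blast
      then show ?thesis using ev Some Q by (simp add: gg_def)
    qed
  next
    case b
    have ws: "set (alt_word x y m) \<subseteq> S'" "set (alt_word y x m) \<subseteq> S'"
      using alt_word_set[of x y m] alt_word_set[of y x m] b by auto
    have ev: "E.Ev r = E.wimg (alt_word x y m) \<ominus>\<^bsub>RR\<^esub> E.wimg (alt_word y x m)"
      using b ws by (simp add: word_prod_carrier a_minus_def Ev_word)
    have eq: "E.wimg (alt_word x y m) = E.wimg (alt_word y x m)"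
    proof (cases x)
      case None
      then obtain a where y: "y = Some a" using b(3) by (cases y) auto
      then have a: "a \<in> S" "a \<noteq> sp" "a \<noteq> sm" using b(2) in_S'_Some by auto
      have "contr_edge_val M sp sm a = enat m" using b(4) None y by simp
      then show ?thesis using braid_none[OF a] None y by simp
    next
      case (Some a)
      show ?thesis
      proof (cases y)
        case None
        then have a: "a \<in> S" "a \<noteq> sp" "a \<noteq> sm" using b(1) Some in_S'_Some by auto
        have "contr_edge_val M sp sm a = enat m" using b(4) None Some by simp
        then show ?thesis using braid_none[OF a] None Some by simp
      next
        case (Some c)
        note xa = \<open>x = Some a\<close>
        have ac: "a \<in> S" "c \<in> S" "a \<noteq> c" using b(1-3) xa Some in_S'_Some by auto
        have mac: "M a c = enat m" using b(4) xa Some ac(3) by simp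
        have p1: "\<forall>z\<in>set (alt_word x y m). gg z = T (the z)" and p2: "\<forall>z\<in>set (alt_word y x m). gg z = T (the z)"
          using alt_word_set[of x y m] alt_word_set[of y x m] xa Some by (auto simp: gg_def)
        have "E.wimg (alt_word x y m) = W (map the (alt_word x y m))" by (rule plain_word[OF p1])
        moreover have "E.wimg (alt_word y x m) = W (map the (alt_word y x m))" by (rule plain_word[OF p2])
        ultimately have "E.wimg (alt_word x y m) = W (alt_word a c m)" "E.wimg (alt_word y x m) = W (alt_word c a m)"
          using xa Some by (simp_all add: map_alt_word)
        then show ?thesis using Bd[OF ac mac] by simp
      qed
    qed
    have "E.wimg (alt_word y x m) \<in> carrier RR" using ws by (simp add: E.wimg_closed)
    then show ?thesis using ev eq by (simp add: R.minus_eq_zero_iff)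
  qed
qed

lemma main_exists:
  "\<exists>\<phi>. A_algebra_hom S' M' L' S M L \<phi>
       \<and> (\<forall>s \<in> S - {sp, sm}. \<phi> (hT S' M' L' (Some s)) = hT S M L s)
       \<and> \<phi> (hT S' M' L' None) = hT S M L sp \<otimes>\<^bsub>hecke S M L\<^esub> hT S M L sm
                  \<otimes>\<^bsub>hecke S M L\<^esub> inv\<^bsub>hecke S M L\<^esub> (hT S M L sp)"
proof -
  have sub: "hecke_rels S' M' L' \<subseteq> a_kernel (free_alg S') RR E.Ev"
  proof
    fix r assume r: "r \<in> hecke_rels S' M' L'"
    then have "r \<in> carrier (free_alg S')" using hecke_rels_carrier by blast
    moreover have "E.Ev r = \<zero>\<^bsub>RR\<^esub>" using r by (rule Ev_rels)
    ultimately show "r \<in> a_kernel (free_alg S') RR E.Ev" unfolding a_kernel_def' by blast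
  qed
  have ker: "\<forall>x\<in>hecke_ideal S' M' L'. E.Ev x = \<zero>\<^bsub>RR\<^esub>"
    using ring.genideal_minimal[OF fa_ring EH.kernel_is_ideal sub]
    unfolding hecke_ideal_def a_kernel_def' by blast
  obtain \<phi> where phi: "\<phi> \<in> ring_hom (free_alg S' Quot hecke_ideal S' M' L') RR"
    and key: "\<forall>x\<in>carrier (free_alg S'). \<phi> (hecke_ideal S' M' L' +>\<^bsub>free_alg S'\<^esub> x) = E.Ev x"
    using quot_lift[OF fa_ring hecke_ring E.Ev_hom hecke_ideal_ideal ker] by blast
  have "A_algebra_hom S' M' L' S M L \<phi>"
    unfolding A_algebra_hom_def
    using phi key by (simp add: hecke_def[symmetric] hscal_def scal_carrier E.Ev_scal)
  moreover have "\<forall>s \<in> S - {sp, sm}. \<phi> (hT S' M' L' (Some s)) = hT S M L s"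
    using key by (auto simp: hT_def[of S'] gen_carrier in_S'_Some E.Ev_gen gg_def)
  moreover have "\<phi> (hT S' M' L' None) = hT S M L sp \<otimes>\<^bsub>hecke S M L\<^esub> hT S M L sm
                  \<otimes>\<^bsub>hecke S M L\<^esub> inv\<^bsub>hecke S M L\<^esub> (hT S M L sp)"
    using key None_in_S' by (simp add: hT_def[of S'] gen_carrier E.Ev_gen gg_def T0_def)
  ultimately show ?thesis by blast
qed

end

theorem mainTheorem5:
  fixes S :: "'s set" and M :: "'s \<Rightarrow> 's \<Rightarrow> enat" and L :: "'s \<Rightarrow> int"
    and sp sm :: 's
  assumes "coxeter_matrix S M"
    and "weight_function S M L"
    and "sp \<in> S" and "sm \<in> S" and "M sp sm = 3"
  shows "\<exists>\<phi>. A_algebra_hom (contr_set S sp sm) (contr_matrix M sp sm) (contr_weight L sp)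
                            S M L \<phi>
            \<and> (\<forall>s \<in> S - {sp, sm}.
                 \<phi> (hT (contr_set S sp sm) (contr_matrix M sp sm) (contr_weight L sp) (Some s))
                   = hT S M L s)
            \<and> \<phi> (hT (contr_set S sp sm) (contr_matrix M sp sm) (contr_weight L sp) None)
                = hT S M L sp \<otimes>\<^bsub>hecke S M L\<^esub> hT S M L sm
                  \<otimes>\<^bsub>hecke S M L\<^esub> inv\<^bsub>hecke S M L\<^esub> (hT S M L sp)"
proof -
  interpret mctx S M L sp sm using assms by unfold_locales
  show ?thesis by (rule main_exists)
qed


end
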